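(* Let $V$ be a countable set, $\Omega_0$ a finite set, $\Omega=\Omega_0^V$ with product $\sigma$-algebra $\mathcal F$, let $q\in\mathbb N$, and let $\Lambda\subset V$. Let $\gamma_\Lambda$ be a proper probability $q$-kernel. For $\eta\in\Omega$ put $\Omega_\Lambda^{\eta}=\{\sigma\in\Omega:\ \sigma_{\Lambda^c}=\eta_{\Lambda^c}\}$ and, for $\eta_1,\dots,\eta_q\in\Omega$, $\Omega_\Lambda^{\eta_1,\dots,\eta_q}=\bigcup_{i=1}^q\Omega_\Lambda^{\eta_i}$. Then for all $\eta_1,\dots,\eta_q\in\Omega$ the probability measure $\gamma_\Lambda(\cdot\mid\eta_1,\dots,\eta_q)$ is supported on $\Omega_\Lambda^{\eta_1,\dots,\eta_q}$, i.e. $\gamma_\Lambda(\Omega_\Lambda^{\eta_1,\dots,\eta_q}\mid\eta_1,\dots,\eta_q)=1$.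
   Context: For $\Delta\subset V$, $\mathcal F_\Delta$ denotes the $\sigma$-algebra on $\Omega$ generated by the coordinate maps $\sigma\mapsto\sigma_x$, $x\in\Delta$; $\sigma_\Delta$ denotes the restriction of $\sigma$ to $\Delta$. $\mathcal F^q=\mathcal F^{\otimes q}$ on $\Omega^q$ and $\mathcal F^q_{\Lambda^c}=(\mathcal F_{\Lambda^c})^{\otimes q}$. A probability $q$-kernel (from $\mathcal F^q_{\Lambda^c}$ to $\mathcal F$) is a map $\gamma_\Lambda:\mathcal F\times\Omega^q\to[0,1]$, $(A,(\eta_1,\dots,\eta_q))\mapsto\gamma_\Lambda(A\mid\eta_1,\dots,\eta_q)$, such that (i) $\gamma_\Lambda(\cdot\mid\eta_1,\dots,\eta_q)$ is a probability measure on $(\Omega,\mathcal F)$ for all $\eta_1,\dots,\eta_q\in\Omega$, and (ii) $\gamma_\Lambda(A\mid\cdot,\dots,\cdot)$ is $\mathcal F^q_{\Lambda^c}$-measurable for every $A\in\mathcal F$. It is proper if $\gamma_\Lambda(A\mid\eta_1,\dots,\eta_q)=\frac1q\sum_{i=1}^q\mathbf 1_A(\eta_i)$ for all $A\in\mathcal F_{\Lambda^c}$ and all $\eta_1,\dots,\eta_q$. *)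

theory Defs
  imports "HOL-Analysis.Analysis"
begin

text \<open>Configuration space Omega = Omega0^V with the product sigma-algebra.
  V is modelled by a countable type 'v, Omega0 by a finite type 'a.\<close>
definition Omega :: "('v \<Rightarrow> 'a) measure" where
  "Omega = (\<Pi>\<^sub>M x\<in>(UNIV::'v set). count_space (UNIV::'a set))"

definition F_on :: "'v set \<Rightarrow> ('v \<Rightarrow> 'a) set set" where
  "F_on D = sigma_sets UNIV {(\<lambda>\<sigma>. \<sigma> x) -` B | x B. x \<in> D}"

definition M_on :: "'v set \<Rightarrow> ('v \<Rightarrow> 'a) measure" where
  "M_on D = measure_of UNIV (F_on D) (\<lambda>_. 0)"

text \<open>q-tuples (eta_1,...,eta_q) are functions on {..<q} (indices shifted to 0..q-1);
  Omega^q carries the product of the sigma-algebras F_{Lambda^c}.\<close>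
definition prob_q_kernel ::
  "nat \<Rightarrow> 'v set \<Rightarrow> (('v \<Rightarrow> 'a) set \<Rightarrow> (nat \<Rightarrow> 'v \<Rightarrow> 'a) \<Rightarrow> real) \<Rightarrow> bool" where
  "prob_q_kernel q L \<gamma> \<longleftrightarrow>
     (\<forall>\<eta> \<in> PiE {..<q} (\<lambda>_. UNIV).
        (\<forall>A \<in> sets Omega. 0 \<le> \<gamma> A \<eta> \<and> \<gamma> A \<eta> \<le> 1) \<and>
        measure_space UNIV (sets Omega) (\<lambda>A. ennreal (\<gamma> A \<eta>)) \<and>
        \<gamma> UNIV \<eta> = 1) \<and>
     (\<forall>A \<in> sets Omega.
        (\<lambda>\<eta>. \<gamma> A \<eta>) \<in> borel_measurable (\<Pi>\<^sub>M i\<in>{..<q}. M_on (- L)))"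

definition proper_q_kernel ::
  "nat \<Rightarrow> 'v set \<Rightarrow> (('v \<Rightarrow> 'a) set \<Rightarrow> (nat \<Rightarrow> 'v \<Rightarrow> 'a) \<Rightarrow> real) \<Rightarrow> bool" where
  "proper_q_kernel q L \<gamma> \<longleftrightarrow>
     (\<forall>A \<in> F_on (- L). \<forall>\<eta> \<in> PiE {..<q} (\<lambda>_. UNIV).
        \<gamma> A \<eta> = (1 / real q) * (\<Sum>i<q. indicator A (\<eta> i)))"

definition Omega_agree :: "'v set \<Rightarrow> ('v \<Rightarrow> 'a) \<Rightarrow> ('v \<Rightarrow> 'a) set" where
  "Omega_agree L \<eta> = {\<sigma>. \<forall>x \<in> - L. \<sigma> x = \<eta> x}"

end

theory Submission
  imports Defs
begin

lemma agree_in_F: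
  fixes L :: "'v::countable set" and e :: "'v \<Rightarrow> 'a"
  shows "Omega_agree L e \<in> F_on (- L)"
proof -
  interpret S: sigma_algebra "UNIV :: ('v \<Rightarrow> 'a) set" "F_on (- L)"
    unfolding F_on_def by (rule sigma_algebra_sigma_sets) auto
  have eq: "Omega_agree L e = (\<Inter>x\<in>-L. (\<lambda>\<sigma>. \<sigma> x) -` {e x})"
    unfolding Omega_agree_def by auto
  have "(\<Inter>x\<in>-L. (\<lambda>\<sigma>. \<sigma> x) -` {e x}) \<in> F_on (- L)"
  proof (rule S.countable_INT'')
    show "UNIV \<in> F_on (- L)" unfolding F_on_def by (rule sigma_sets_top)
    show "countable (- L)" by simp
    fix x assume "x \<in> - L"
    then show "(\<lambda>\<sigma>. \<sigma> x) -` {e x} \<in> F_on (- L)"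
      unfolding F_on_def by (intro sigma_sets.Basic) blast
  qed
  then show ?thesis using eq by simp
qed

theorem mainTheorem1:
  fixes q :: nat and L :: "'v::countable set"
    and \<gamma> :: "('v \<Rightarrow> 'a::finite) set \<Rightarrow> (nat \<Rightarrow> 'v \<Rightarrow> 'a) \<Rightarrow> real"
  assumes "q \<ge> 1"
    and "prob_q_kernel q L \<gamma>"
    and "proper_q_kernel q L \<gamma>"
  shows "\<forall>\<eta> \<in> PiE {..<q} (\<lambda>_. UNIV). \<gamma> (\<Union>i<q. Omega_agree L (\<eta> i)) \<eta> = 1"
proof
  fix \<eta> :: "nat \<Rightarrow> 'v \<Rightarrow> 'a" assume h: "\<eta> \<in> PiE {..<q} (\<lambda>_. UNIV)"
  interpret S: sigma_algebra "UNIV :: ('v \<Rightarrow> 'a) set" "F_on (- L)"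
    unfolding F_on_def by (rule sigma_algebra_sigma_sets) auto
  let ?A = "\<Union>i<q. Omega_agree L (\<eta> i)"
  have A: "?A \<in> F_on (- L)"
    by (intro S.finite_UN agree_in_F) auto
  have ind: "\<And>i. i < q \<Longrightarrow> indicator ?A (\<eta> i) = (1::real)"
    by (auto simp: indicator_def Omega_agree_def)
  have "\<gamma> ?A \<eta> = (1 / real q) * (\<Sum>i<q. indicator ?A (\<eta> i))"
    using assms(3) A h unfolding proper_q_kernel_def by blast
  also have "\<dots> = (1 / real q) * (\<Sum>i<q. 1)" using ind by simp
  also have "\<dots> = 1" using assms(1) by simp
  finally show "\<gamma> ?A \<eta> = 1" .
qed

end
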